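(* Let $\mathbb{E}$ be a countable subset of $\mathbb{R}$ with $0\in\mathbb{E}$, and let $\mathcal{V}$ be a closed $\mathbb{E}$-vine over a complete metric space $(X,d)$. Assume that for every $n\ge0$ we have $\mathcal{V}_{(n)}=\overline{\pi_n[\mathcal{V}_{(n+1)}]}$. Then either $\mathcal{V}=\emptyset$ or $\mathcal{V}$ is not well founded.
   Context: For finite $G\subset\mathbb{N}$, $[\mathbb{E},G]=\{f:\mathbb{N}\to\mathbb{E}:\mathrm{supp}(f)\subset G\}$ (so $[\mathbb{E},\emptyset]=\{0\}$). An $\mathbb{E}$-bunch over a set $X$ is an element $\chi=(x_f)_{f\in[\mathbb{E},G]}\in X^{[\mathbb{E},G]}$ for some finite $G\subset\mathbb{N}$. For $\chi=(x_f)_{f\in[\mathbb{E},F]}$ and $\psi=(y_f)_{f\in[\mathbb{E},G]}$ write $\chi\preceq\psi$ if $F$ is an initial segment of $G$ and $y_f=x_f$ for all $f\in[\mathbb{E},F]$. An $\mathbb{E}$-vine over $X$ is a set $\mathcal{V}$ of $\mathbb{E}$-bunches over $X$ such that $\chi\in\mathcal{V}$ and $\psi\preceq\chi$ imply $\psi\in\mathcal{V}$. It is well founded if $(\mathcal{V},\preceq)$ contains no infinite totally ordered subset. For $n\ge0$, $\mathcal{V}_{(n)}=\{(x_f)_{f\in[\mathbb{E},G]}\in\mathcal{V}:|G|=n\}$, a subset of the disjoint union $\bigcup_{G\in[\mathbb{N}]^n}X^{[\mathbb{E},G]}$, each $X^{[\mathbb{E},G]}$ carrying the product topology. $\mathcal{V}$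 is closed if $\mathcal{V}\cap X^{[\mathbb{E},G]}$ is closed in $X^{[\mathbb{E},G]}$ for every finite $G$. For $G\in[\mathbb{N}]^{n+1}$ put $G'=G\setminus\{\max G\}$ and define $\pi_n:\mathcal{V}_{(n+1)}\to\mathcal{V}_{(n)}$ by $\pi_n((x_f)_{f\in[\mathbb{E},G]})=(x_f)_{f\in[\mathbb{E},G']}$. The closure in the hypothesis is taken in $\bigcup_{G\in[\mathbb{N}]^n}X^{[\mathbb{E},G]}$. *)

theory Defs
  imports "HOL-Analysis.Analysis"
begin

definition EG :: "real set \<Rightarrow> nat set \<Rightarrow> (nat \<Rightarrow> real) set" where
  "EG E G = {f. (\<forall>n. f n \<in> E) \<and> (\<forall>n. f n \<noteq> 0 \<longrightarrow> n \<in> G)}"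

text \<open>An E-bunch over X (the type 'a) is a pair (G, x) with G finite and
  x an element of X^[E,G], represented as an extensional function on [E,G].\<close>
type_synonym 'a bunch = "nat set \<times> ((nat \<Rightarrow> real) \<Rightarrow> 'a)"

definition bunches :: "real set \<Rightarrow> 'a bunch set" where
  "bunches E = {(G, x). finite G \<and> x \<in> extensional (EG E G)}"

definition initial_segment :: "nat set \<Rightarrow> nat set \<Rightarrow> bool" where
  "initial_segment F G \<longleftrightarrow> F \<subseteq> G \<and> (\<forall>a\<in>F. \<forall>b\<in>G. b < a \<longrightarrow> b \<in> F)"

definition bunch_le :: "real set \<Rightarrow> 'a bunch \<Rightarrow> 'a bunch \<Rightarrow> bool" where
  "bunch_le E c d \<longleftrightarrow> initial_segment (fst c) (fst d) \<and>
     (\<forall>f\<in>EG E (fst c). snd d f = snd c f)"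

definition is_vine :: "real set \<Rightarrow> 'a bunch set \<Rightarrow> bool" where
  "is_vine E V \<longleftrightarrow> V \<subseteq> bunches E \<and>
     (\<forall>c\<in>V. \<forall>d\<in>bunches E. bunch_le E d c \<longrightarrow> d \<in> V)"

definition vine_well_founded :: "real set \<Rightarrow> 'a bunch set \<Rightarrow> bool" where
  "vine_well_founded E V \<longleftrightarrow>
     \<not> (\<exists>C\<subseteq>V. infinite C \<and> (\<forall>a\<in>C. \<forall>b\<in>C. bunch_le E a b \<or> bunch_le E b a))"

definition bunch_topology :: "real set \<Rightarrow> nat set \<Rightarrow> ((nat \<Rightarrow> real) \<Rightarrow> 'a::topological_space) topology" where
  "bunch_topology E G = product_topology (\<lambda>_. euclidean) (EG E G)"

definition vine_closed :: "real set \<Rightarrow> 'a::topological_space bunch set \<Rightarrow> bool" where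
  "vine_closed E V \<longleftrightarrow> (\<forall>G. finite G \<longrightarrow> closedin (bunch_topology E G) {x. (G, x) \<in> V})"

definition level_topology :: "real set \<Rightarrow> nat \<Rightarrow> 'a::topological_space bunch topology" where
  "level_topology E n = sum_topology (bunch_topology E) {G. finite G \<and> card G = n}"

definition level :: "'a bunch set \<Rightarrow> nat \<Rightarrow> 'a bunch set" where
  "level V n = {c\<in>V. card (fst c) = n}"

definition vine_proj :: "real set \<Rightarrow> 'a bunch \<Rightarrow> 'a bunch" where
  "vine_proj E c = (let G' = fst c - {Max (fst c)} in (G', restrict (snd c) (EG E G')))"

end

theory Submission
  imports Defs
begin

lemma cauchy_geom_aux:
  fixes a :: "nat \<Rightarrow> 'b::metric_space"
  assumes "\<And>n. n \<ge> N \<Longrightarrow> dist (a n) (a (Suc n)) < (1/2)^n"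
    and "n \<ge> N"
  shows "dist (a n) (a (n+k)) \<le> 2*(1/2)^n - 2*(1/2)^(n+k)"
proof (induction k)
  case 0
  then show ?case by simp
next
  case (Suc k)
  have "dist (a n) (a (n + Suc k)) \<le> dist (a n) (a (n+k)) + dist (a (n+k)) (a (Suc (n+k)))"
    by (simp add: dist_triangle)
  also have "\<dots> \<le> 2*(1/2)^n - 2*(1/2)^(n+k) + (1/2)^(n+k)"
    using Suc assms(1)[of "n+k"] assms(2) by fastforce
  also have "\<dots> = 2*(1/2)^n - 2*(1/2)^(n + Suc k)" by simp
  finally show ?case .
qed

lemma cauchy_geom:
  fixes a :: "nat \<Rightarrow> 'b::metric_space"
  assumes "\<And>n. n \<ge> N \<Longrightarrow> dist (a n) (a (Suc n)) < (1/2)^n"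
  shows "Cauchy a"
proof (rule metric_CauchyI)
  fix e :: real assume "e > 0"
  then obtain M0 where M0: "(1/2::real)^M0 < e/4"
    using real_arch_pow_inv[of "e/4" "1/2::real"] \<open>e > 0\<close> by auto
  define M where "M = max M0 N"
  have hM: "(1/2::real)^M < e/4"
  proof -
    have "(1/2::real)^M \<le> (1/2)^M0" by (rule power_decreasing) (auto simp: M_def)
    then show ?thesis using M0 by linarith
  qed
  have NM: "N \<le> M" unfolding M_def by simp
  show "\<exists>M. \<forall>m\<ge>M. \<forall>n\<ge>M. dist (a m) (a n) < e"
  proof (intro exI allI impI)
    fix m n assume mn: "m \<ge> M" "n \<ge> M"
    have d: "dist (a M) (a p) < e/2" if "p \<ge> M" for p
    proof -
      have "dist (a M) (a (M + (p - M))) \<le> 2*(1/2)^M - 2*(1/2)^(M+(p-M))"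
        by (rule cauchy_geom_aux[OF assms NM])
      also have "\<dots> \<le> 2*(1/2)^M" by simp
      finally show ?thesis using hM that by simp
    qed
    have "dist (a m) (a n) \<le> dist (a M) (a m) + dist (a M) (a n)"
      by (simp add: dist_triangle3)
    then show "dist (a m) (a n) < e" using d[OF mn(1)] d[OF mn(2)] by linarith
  qed
qed

lemma openin_finite_balls:
  fixes a :: "'j \<Rightarrow> 'b::metric_space" and h :: "'j \<Rightarrow> 'i"
  assumes "finite J" "\<And>j. j \<in> J \<Longrightarrow> h j \<in> I"
  shows "openin (product_topology (\<lambda>_. euclidean) I)
     {z \<in> topspace (product_topology (\<lambda>_. euclidean) I). \<forall>j\<in>J. dist (z (h j)) (a j) < (r::real)}"
proof -
  define P where "P = (product_topology (\<lambda>_. euclidean) I :: ('i \<Rightarrow> 'b) topology)"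
  have o: "openin P {z \<in> topspace P. z (h j) \<in> ball (a j) r}" if "j \<in> J" for j
    unfolding P_def
    by (rule openin_continuous_map_preimage[OF continuous_map_product_projection]) (use assms that in auto)
  have "openin P ((\<Inter>j\<in>J. {z \<in> topspace P. z (h j) \<in> ball (a j) r}) \<inter> topspace P)"
    by (rule openin_INT[OF assms(1)]) (rule o)
  moreover have "(\<Inter>j\<in>J. {z \<in> topspace P. z (h j) \<in> ball (a j) r}) \<inter> topspace P =
     {z \<in> topspace P. \<forall>j\<in>J. dist (z (h j)) (a j) < r}"
    by (auto simp: dist_commute)
  ultimately show ?thesis unfolding P_def by simp
qed

lemma initial_segment_trans:
  "initial_segment F G \<Longrightarrow> initial_segment G H \<Longrightarrow> initial_segment F H"
  unfolding initial_segment_def by blast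

lemma initial_segment_step:
  assumes "finite G" "G \<noteq> {}"
  shows "initial_segment (G - {Max G}) G"
  unfolding initial_segment_def using assms Max_ge by fastforce

lemma EG_mono: "F \<subseteq> G \<Longrightarrow> EG E F \<subseteq> EG E G"
  unfolding EG_def by blast

lemma countable_EG:
  assumes "countable E" "0 \<in> E" "finite G"
  shows "countable (EG E G)"
proof -
  have "EG E G \<subseteq> (\<lambda>g n. if n \<in> G then g n else 0) ` (Pi\<^sub>E G (\<lambda>_. E))"
  proof
    fix f assume f: "f \<in> EG E G"
    have "f = (\<lambda>n. if n \<in> G then restrict f G n else 0)"
      using f unfolding EG_def by (auto simp: fun_eq_iff)
    moreover have "restrict f G \<in> Pi\<^sub>E G (\<lambda>_. E)" using f unfolding EG_def by auto
    ultimately show "f \<in> (\<lambda>g n. if n \<in> G then g n else 0) ` (Pi\<^sub>E G (\<lambda>_. E))" by blast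
  qed
  moreover have "countable (Pi\<^sub>E G (\<lambda>_. E))"
    by (rule countable_PiE) (use assms in auto)
  ultimately show ?thesis by (meson countable_image countable_subset)
qed

lemma vine_down:
  assumes "is_vine E V" "c \<in> V" "finite F" "initial_segment F (fst c)"
  shows "(F, restrict (snd c) (EG E F)) \<in> V"
proof -
  have "(F, restrict (snd c) (EG E F)) \<in> bunches E"
    using assms(3) unfolding bunches_def by simp
  moreover have "bunch_le E (F, restrict (snd c) (EG E F)) c"
    using assms(4) unfolding bunch_le_def by simp
  ultimately show ?thesis using assms(1,2) unfolding is_vine_def by blast
qed

theorem lemma3p1:
  fixes E :: "real set" and V :: "'a::complete_space bunch set"
  assumes "countable E" and "0 \<in> E"
    and "is_vine E V" and "vine_closed E V"
    and "\<forall>n. level V n = level_topology E n closure_of (vine_proj E ` level V (Suc n))"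
  shows "V = {} \<or> \<not> vine_well_founded E V"
proof (cases "V = {}")
  case True then show ?thesis by simp
next
  case False
  note vine = assms(3)
  have Vb: "V \<subseteq> bunches E" using vine unfolding is_vine_def by blast
  obtain c where c: "c \<in> V" using False by blast
  define \<psi>0 where "\<psi>0 = ({}::nat set, restrict (snd c) (EG E {}))"
  have \<psi>0V: "\<psi>0 \<in> level V 0"
    using vine_down[OF vine c, of "{}"] unfolding \<psi>0_def level_def initial_segment_def by simp
  define U where "U = \<Union> (EG E ` {G. finite G})"
  have cU: "countable U" unfolding U_def
    by (rule countable_UN) (auto intro: countable_EG[OF assms(1,2)] countable_Collect_finite)
  have "(\<lambda>_. 0) \<in> EG E {}" using assms(2) unfolding EG_def by simp
  then have Une: "U \<noteq> {}" unfolding U_def by blast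
  define e where "e = from_nat_into U"
  have rangee: "range e = U" unfolding e_def using range_from_nat_into[OF Une cU] .
  define Q where "Q = (\<lambda>n (\<psi>::'a bunch) \<psi>'. \<psi>' \<in> level V (Suc n) \<and> fst \<psi>' - {Max (fst \<psi>')} = fst \<psi> \<and>
      (\<forall>j\<le>n. e j \<in> EG E (fst \<psi>) \<longrightarrow> dist (snd \<psi>' (e j)) (snd \<psi> (e j)) < (1/2)^n))"
  have step: "\<exists>\<psi>'. Q n \<psi> \<psi>'" if "\<psi> \<in> level V n" for n \<psi>
  proof -
    obtain G x where \<psi>: "\<psi> = (G, x)" by fastforce
    have GV: "(G, x) \<in> V" "card G = n" using that \<psi> unfolding level_def by auto
    then have Gf: "finite G" and xe: "x \<in> extensional (EG E G)"
      using Vb unfolding bunches_def by auto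
    have cl: "(G, x) \<in> level_topology E n closure_of (vine_proj E ` level V (Suc n))"
      using that \<psi> assms(5)[rule_format, of n] by simp
    define J where "J = {j. j \<le> n \<and> e j \<in> EG E G}"
    define S where "S = {z \<in> topspace (bunch_topology E G). \<forall>j\<in>J. dist (z (e j)) (x (e j)) < ((1/2)^n::real)}"
    have oS: "openin (bunch_topology E G) S"
      unfolding S_def bunch_topology_def
      by (rule openin_finite_balls) (auto simp: J_def)
    have oT: "openin (level_topology E n) ({G} \<times> S)"
      unfolding level_topology_def openin_sum_topology
    proof (intro conjI ballI)
      show "{G} \<times> S \<subseteq> Sigma {G. finite G \<and> card G = n} (topspace \<circ> bunch_topology E)"
        using Gf GV(2) openin_subset[OF oS] by auto
    next
      fix i :: "nat set" assume "i \<in> {G. finite G \<and> card G = n}"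
      show "openin (bunch_topology E i) {z. (i, z) \<in> {G} \<times> S}"
      proof (cases "i = G")
        case True then show ?thesis using oS by simp
      next
        case False then show ?thesis by simp
      qed
    qed
    have xS: "(G, x) \<in> {G} \<times> S"
      using xe unfolding S_def bunch_topology_def by (auto simp: PiE_def)
    have cl2: "\<forall>T. (G, x) \<in> T \<and> openin (level_topology E n) T \<longrightarrow> (\<exists>y. y \<in> vine_proj E ` level V (Suc n) \<and> y \<in> T)"
      using cl unfolding in_closure_of by (rule conjunct2)
    obtain y where y: "y \<in> vine_proj E ` level V (Suc n)" "y \<in> {G} \<times> S"
      using cl2[rule_format, OF conjI[OF xS oT]] by (elim exE conjE)
    then obtain ch where ch: "ch \<in> level V (Suc n)" "y = vine_proj E ch" by blast
    have fy: "fst ch - {Max (fst ch)} = G" and sy: "snd y = restrict (snd ch) (EG E G)"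
      using y(2) ch(2) unfolding vine_proj_def Let_def by auto
    have "snd y \<in> S" using y(2) by auto
    then have "\<forall>j\<le>n. e j \<in> EG E G \<longrightarrow> dist (snd ch (e j)) (x (e j)) < (1/2)^n"
      unfolding S_def J_def sy by auto
    then have "Q n \<psi> ch" unfolding Q_def using ch(1) fy \<psi> by simp
    then show ?thesis by blast
  qed
  then have "\<forall>n \<psi>. \<exists>\<psi>'. \<psi> \<in> level V n \<longrightarrow> Q n \<psi> \<psi>'" by blast
  then obtain s where s: "\<And>n \<psi>. \<psi> \<in> level V n \<Longrightarrow> Q n \<psi> (s n \<psi>)" by metis
  define seq where "seq = rec_nat \<psi>0 s"
  have seq0: "seq 0 = \<psi>0" and seqS: "seq (Suc n) = s n (seq n)" for n
    unfolding seq_def by simp_all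
  have lev: "seq n \<in> level V n" for n
  proof (induction n)
    case 0 then show ?case using \<psi>0V seq0 by simp
  next
    case (Suc n) then show ?case using s[OF Suc] seqS unfolding Q_def by simp
  qed
  define Gs where "Gs n = fst (seq n)" for n
  define xs where "xs n = snd (seq n)" for n
  have seqV: "seq n \<in> V" and cardG: "card (Gs n) = n" for n
    using lev[of n] unfolding level_def Gs_def by auto
  have finG: "finite (Gs n)" for n using seqV[of n] Vb unfolding bunches_def Gs_def by auto
  have Gstep: "Gs (Suc n) - {Max (Gs (Suc n))} = Gs n" for n
    using s[OF lev[of n]] seqS[of n] unfolding Q_def Gs_def by simp
  have dstep: "dist (xs (Suc n) (e j)) (xs n (e j)) < (1/2)^n" if "j \<le> n" "e j \<in> EG E (Gs n)" for n j
    using s[OF lev[of n]] seqS[of n] that unfolding Q_def Gs_def xs_def by simp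
  have initS: "initial_segment (Gs n) (Gs (Suc n))" for n
  proof -
    have "Gs (Suc n) \<noteq> {}" using cardG[of "Suc n"] by auto
    then show ?thesis using initial_segment_step[OF finG] Gstep by metis
  qed
  have init: "initial_segment (Gs k) (Gs m)" if "k \<le> m" for k m
    using that
  proof (induction m rule: dec_induct)
    case base then show ?case unfolding initial_segment_def by simp
  next
    case (step m) then show ?case using initial_segment_trans initS by blast
  qed
  have EGsub: "EG E (Gs k) \<subseteq> EG E (Gs m)" if "k \<le> m" for k m
    using EG_mono[of "Gs k" "Gs m" E] init[OF that] unfolding initial_segment_def by simp
  define y where "y f = lim (\<lambda>n. xs n f)" for f
  have conv: "(\<lambda>n. xs n f) \<longlonglongrightarrow> y f" if "f \<in> EG E (Gs k)" for f k
  proof -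
    have "f \<in> U" unfolding U_def using that finG by blast
    then obtain j where j: "f = e j" using rangee by blast
    have "Cauchy (\<lambda>n. xs n f)"
    proof (rule cauchy_geom[of "max j k"])
      fix n assume n: "max j k \<le> n"
      have "e j \<in> EG E (Gs n)" using EGsub[of k n] n that j by auto
      then show "dist (xs n f) (xs (Suc n) f) < (1/2)^n"
        using dstep[of j n] n j by (simp add: dist_commute)
    qed
    then show ?thesis unfolding y_def using Cauchy_convergent convergent_LIMSEQ_iff by blast
  qed
  define b where "b k = (Gs k, restrict y (EG E (Gs k)))" for k
  have bV: "b k \<in> V" for k
  proof -
    have cl: "closedin (bunch_topology E (Gs k)) {x. (Gs k, x) \<in> V}"
      using assms(4) finG unfolding vine_closed_def by blast
    have lim: "limitin (bunch_topology E (Gs k)) (\<lambda>n. restrict (xs n) (EG E (Gs k)))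
                 (restrict y (EG E (Gs k))) sequentially"
      unfolding bunch_topology_def limitin_componentwise
      using conv by (auto simp: PiE_def)
    have ev: "eventually (\<lambda>n. restrict (xs n) (EG E (Gs k)) \<in> {x. (Gs k, x) \<in> V}) sequentially"
      unfolding eventually_sequentially
    proof (intro exI allI impI)
      fix n assume "k \<le> n"
      then show "restrict (xs n) (EG E (Gs k)) \<in> {x. (Gs k, x) \<in> V}"
        using vine_down[OF vine seqV[of n] finG[of k]] init[of k n] unfolding Gs_def xs_def by simp
    qed
    have "restrict y (EG E (Gs k)) \<in> {x. (Gs k, x) \<in> V}"
      by (rule limitin_closedin[OF lim cl ev]) simp
    then show ?thesis unfolding b_def by simp
  qed
  have ble: "bunch_le E (b k) (b m)" if "k \<le> m" for k m
    using init[OF that] EGsub[OF that] unfolding bunch_le_def b_def by auto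
  have injb: "inj b"
  proof (rule injI)
    fix k m assume "b k = b m"
    then have "Gs k = Gs m" unfolding b_def by simp
    then show "k = m" using cardG by metis
  qed
  have "infinite (range b)" using injb range_inj_infinite by blast
  moreover have "range b \<subseteq> V" using bV by blast
  moreover have "\<forall>p\<in>range b. \<forall>q\<in>range b. bunch_le E p q \<or> bunch_le E q p"
  proof (intro ballI)
    fix p q assume "p \<in> range b" "q \<in> range b"
    then obtain k m where "p = b k" "q = b m" by (elim imageE)
    then show "bunch_le E p q \<or> bunch_le E q p"
      using ble[of k m] ble[of m k] by (cases "k \<le> m") auto
  qed
  ultimately have "\<exists>C\<subseteq>V. infinite C \<and> (\<forall>p\<in>C. \<forall>q\<in>C. bunch_le E p q \<or> bunch_le E q p)"
    by (intro exI[of _ "range b"]) simp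
  then show ?thesis unfolding vine_well_founded_def by simp
qed

end
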